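(* Let $A\in\mathbb{R}^{n\times n}$ be Metzler, $J\in\mathbb{R}^{n\times n}$ nonnegative, $\bar T>0$, $d_h\in\mathbb{N}$, $\varepsilon>0$ and $\epsilon>0$. Assume there exist a polynomial vector $\zeta:\mathbb{R}\to\mathbb{R}^n$ of degree at most $d_h$ and vectors $\theta_{ij}\in\mathbb{R}^n$, for integers $i,j\ge0$ with $i+j\le d_h$, such that: (i) $\theta_{ij}\ge0$ for all such $i,j$; (ii) $\zeta(0)-\epsilon\mathbf{1}_n\ge0$; (iii) every component of the polynomial vector $-A^\top\zeta(\tau)+\dot\zeta(\tau)-\sum_{i+j\le d_h}\theta_{ij}\tau^i(\bar T-\tau)^j$, written in the monomial basis $1,\tau,\tau^2,\dots$, has only nonnegative coefficients; (iv) $-\zeta(\bar T)^\top J+\zeta(0)^\top-\varepsilon\mathbf{1}_n^\top\ge0$. Then $\zeta(\tau)^\top A-\dot\zeta(\tau)^\top\le0$ for all $\tau\in[0,\bar T]$, $\zeta(\bar T)^\top J-\zeta(0)^\top+\varepsilon\mathbf{1}_n^\top\le0$, and the impulsive system $\dot x=Ax$ ($t\ne t_k$), $x(t_k^+)=Jx(t_k)$ is asymptotically stable under constant dwell-time $\bar T$.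
   Context: A matrix is Metzler if its off-diagonal entries are nonnegative and nonnegative if all entries are. Vector inequalities are componentwise; $\mathbf{1}_n$ is the vector of ones. In the impulsive system $x(t^+)=\lim_{s\downarrow t}x(s)$, impulse times are strictly increasing, and constant dwell-time $\bar T$ means $t_{k+1}-t_k=\bar T$ for all $k$; asymptotic stability means global asymptotic stability of the zero solution. *)

theory Defs
  imports "HOL-Analysis.Analysis" "HOL-Computational_Algebra.Polynomial"
begin

definition metzler :: "real^'n^'n \<Rightarrow> bool" where
  "metzler A \<longleftrightarrow> (\<forall>i j. i \<noteq> j \<longrightarrow> A $ i $ j \<ge> 0)"

definition nonneg_mat :: "real^'n^'n \<Rightarrow> bool" where
  "nonneg_mat J \<longleftrightarrow> (\<forall>i j. J $ i $ j \<ge> 0)"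

definition pvec_eval :: "real poly ^ 'n \<Rightarrow> real \<Rightarrow> real ^ 'n" where
  "pvec_eval z t = (\<chi> i. poly (z $ i) t)"

definition pvec_deriv :: "real poly ^ 'n \<Rightarrow> real poly ^ 'n" where
  "pvec_deriv z = (\<chi> i. pderiv (z $ i))"

definition cond_poly ::
  "real^'n^'n \<Rightarrow> real poly ^ 'n \<Rightarrow> (nat \<Rightarrow> nat \<Rightarrow> real^'n) \<Rightarrow> nat \<Rightarrow> real \<Rightarrow> real poly ^ 'n" where
  "cond_poly A z theta d T = (\<chi> k.
      - (\<Sum>l\<in>UNIV. smult (A $ l $ k) (z $ l)) + pderiv (z $ k)
      - (\<Sum>(i,j)\<in>{(i,j). i + j \<le> d}. smult (theta i j $ k) ([:0, 1:] ^ i * [:T, -1:] ^ j)))"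

text \<open>The solution lives on [t_0, inf), is left-continuous at impulse times
  (x(t_k) is the pre-jump value) and its right limit at t_k is J x(t_k).\<close>
definition impulsive_solution ::
  "real^'n^'n \<Rightarrow> real^'n^'n \<Rightarrow> real \<Rightarrow> (nat \<Rightarrow> real) \<Rightarrow> (real \<Rightarrow> real^'n) \<Rightarrow> bool" where
  "impulsive_solution A J Tbar tk x \<longleftrightarrow>
     (\<forall>k. tk (Suc k) - tk k = Tbar) \<and>
     (\<forall>k. continuous_on {tk k<..tk (Suc k)} x) \<and>
     (\<forall>k. \<forall>s\<in>{tk k<..<tk (Suc k)}. (x has_vector_derivative (A *v x s)) (at s)) \<and>
     (\<forall>k. (x \<longlongrightarrow> J *v x (tk k)) (at_right (tk k)))"

definition GAS_const_dwell :: "real^'n^'n \<Rightarrow> real^'n^'n \<Rightarrow> real \<Rightarrow> bool" where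
  "GAS_const_dwell A J Tbar \<longleftrightarrow>
     (\<forall>e>0. \<exists>\<delta>>0. \<forall>tk x. impulsive_solution A J Tbar tk x \<longrightarrow> norm (x (tk 0)) < \<delta> \<longrightarrow>
        (\<forall>s\<ge>tk 0. norm (x s) < e)) \<and>
     (\<forall>tk x. impulsive_solution A J Tbar tk x \<longrightarrow> (x \<longlongrightarrow> 0) at_top)"

end

theory Submission
  imports Defs
begin


lemma poly_nonneg_coeffs:
  fixes p :: "real poly"
  assumes "\<forall>m. coeff p m \<ge> 0" "t \<ge> 0"
  shows "poly p t \<ge> 0"
  unfolding poly_altdef using assms by (intro sum_nonneg) auto

lemma cond_pt:
  fixes A :: "real^'n^'n" and zeta :: "real poly ^ 'n"
  assumes th: "\<forall>i j. i + j \<le> d \<longrightarrow> theta i j \<ge> 0"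
    and c: "\<forall>k m. coeff (cond_poly A zeta theta d T $ k) m \<ge> 0"
    and t: "t \<in> {0..T}"
  shows "(\<Sum>i\<in>UNIV. poly (zeta$i) t * A$i$j) - poly (pderiv (zeta$j)) t \<le> 0"
proof -
  have p0: "poly (cond_poly A zeta theta d T $ j) t \<ge> 0"
    using c t by (intro poly_nonneg_coeffs) auto
  have s0: "(\<Sum>(i,k)\<in>{(i,k). i + k \<le> d}. theta i k $ j * (t ^ i * (T - t) ^ k)) \<ge> 0"
  proof (intro sum_nonneg)
    fix x assume "x \<in> {(i,k). i + k \<le> d}"
    then obtain i k where x: "x = (i,k)" "i + k \<le> d" by auto
    have "theta i k $ j \<ge> 0" using th x(2) by (auto simp: less_eq_vec_def)
    then show "(case x of (i, k) \<Rightarrow> theta i k $ j * (t ^ i * (T - t) ^ k)) \<ge> 0"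
      using t x by auto
  qed
  have "poly (cond_poly A zeta theta d T $ j) t = - (\<Sum>l\<in>UNIV. A $ l $ j * poly (zeta $ l) t) + poly (pderiv (zeta $ j)) t
     - (\<Sum>(i,k)\<in>{(i,k). i + k \<le> d}. theta i k $ j * (t ^ i * (T - t) ^ k))"
    unfolding cond_poly_def by (simp add: poly_sum case_prod_beta poly_monom)
  with p0 s0 show ?thesis by (simp add: mult.commute)
qed



lemma diag_le_mu:
  fixes A :: "real^'n^'n"
  shows "- (\<Sum>k\<in>UNIV. \<bar>A$k$k\<bar>) \<le> A$i$i"
proof -
  have "\<bar>A$i$i\<bar> \<le> (\<Sum>k\<in>UNIV. \<bar>A$k$k\<bar>)"
    by (rule member_le_sum) auto
  then show ?thesis by linarith
qed

lemma sum_ge_diag: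
  fixes A :: "real^'n^'n" and z :: "'n \<Rightarrow> real"
  assumes "metzler A" "\<forall>l. z l \<ge> 0"
  shows "(\<Sum>l\<in>UNIV. z l * A$l$i) \<ge> z i * A$i$i"
proof -
  have "(\<Sum>l\<in>UNIV. z l * A$l$i) = z i * A$i$i + (\<Sum>l\<in>UNIV - {i}. z l * A$l$i)"
    by (simp add: sum.remove)
  moreover have "(\<Sum>l\<in>UNIV - {i}. z l * A$l$i) \<ge> 0"
    using assms by (intro sum_nonneg) (auto simp: metzler_def)
  ultimately show ?thesis by linarith
qed

lemma mono_u:
  fixes A :: "real^'n^'n" and zeta :: "real poly ^ 'n"
  assumes metz: "metzler A"
    and dec: "\<And>t j. t \<in> {0..T} \<Longrightarrow> (\<Sum>i\<in>UNIV. poly (zeta$i) t * A$i$j) - poly (pderiv (zeta$j)) t \<le> 0"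
    and ab: "0 \<le> a" "a \<le> b" "b \<le> T"
    and pos: "\<And>t l. t \<in> {a<..<b} \<Longrightarrow> poly (zeta$l) t \<ge> 0"
  shows "exp ((\<Sum>k\<in>UNIV. \<bar>A$k$k\<bar>) * a) * poly (zeta$i) a \<le> exp ((\<Sum>k\<in>UNIV. \<bar>A$k$k\<bar>) * b) * poly (zeta$i) b"
proof -
  define mu where "mu = (\<Sum>k\<in>UNIV. \<bar>A$k$k\<bar>)"
  show ?thesis unfolding mu_def[symmetric]
  proof (rule DERIV_nonneg_imp_increasing_open[OF ab(2)])
    show "continuous_on {a..b} (\<lambda>t. exp (mu * t) * poly (zeta $ i) t)"
      by (intro continuous_intros)
    fix t assume t: "a < t" "t < b"
    have d: "((\<lambda>t. exp (mu * t) * poly (zeta $ i) t) has_real_derivative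
       exp (mu * t) * (mu * poly (zeta $ i) t + poly (pderiv (zeta $ i)) t)) (at t)"
      by (auto intro!: derivative_eq_intros simp: algebra_simps)
    have tT: "t \<in> {0..T}" using t ab by auto
    have p: "\<forall>l. poly (zeta$l) t \<ge> 0" using pos t by auto
    have "poly (pderiv (zeta$i)) t \<ge> (\<Sum>l\<in>UNIV. poly (zeta$l) t * A$l$i)"
      using dec[OF tT, of i] by linarith
    moreover have "(\<Sum>l\<in>UNIV. poly (zeta$l) t * A$l$i) \<ge> poly (zeta$i) t * A$i$i"
      using sum_ge_diag[OF metz p] .
    moreover have "poly (zeta$i) t * A$i$i \<ge> poly (zeta$i) t * (- mu)"
      using diag_le_mu[of A i] p unfolding mu_def by (intro mult_left_mono) auto
    ultimately have "mu * poly (zeta $ i) t + poly (pderiv (zeta $ i)) t \<ge> 0"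
      by (simp add: algebra_simps)
    then show "\<exists>y. ((\<lambda>t. exp (mu * t) * poly (zeta $ i) t) has_real_derivative y) (at t) \<and> 0 \<le> y"
      using d by (intro exI[of _ "exp (mu * t) * (mu * poly (zeta $ i) t + poly (pderiv (zeta $ i)) t)"]) auto
  qed
qed

lemma zeta_pos:
  fixes A :: "real^'n^'n" and zeta :: "real poly ^ 'n"
  assumes metz: "metzler A"
    and dec: "\<And>t j. t \<in> {0..T} \<Longrightarrow> (\<Sum>i\<in>UNIV. poly (zeta$i) t * A$i$j) - poly (pderiv (zeta$j)) t \<le> 0"
    and init: "\<And>i. poly (zeta$i) 0 \<ge> e2" and e2: "e2 > 0" and T: "T \<ge> 0"
  shows "\<forall>t\<in>{0..T}. \<forall>i. poly (zeta$i) t \<ge> e2 * exp (- (\<Sum>k\<in>UNIV. \<bar>A$k$k\<bar>) * T)"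
proof -
  define mu where "mu = (\<Sum>k\<in>UNIV. \<bar>A$k$k\<bar>)"
  have mu0: "mu \<ge> 0" unfolding mu_def by (intro sum_nonneg) auto
  define Z where "Z = {0..T} \<inter> (\<Union>i. {t. poly (zeta$i) t \<le> 0})"
  have allpos: "\<forall>t\<in>{0..T}. \<forall>i. poly (zeta$i) t > 0"
  proof (rule ccontr)
    assume "\<not> ?thesis"
    then have ne: "Z \<noteq> {}" unfolding Z_def by (auto simp: not_less)
    have cl: "closed Z" unfolding Z_def
      by (intro closed_Int closed_atLeastAtMost closed_UN ballI closed_Collect_le) (auto intro: continuous_intros)
    have bb: "bdd_below Z" unfolding Z_def by (auto intro: bdd_belowI[of _ 0])
    define t1 where "t1 = Inf Z"
    have t1Z: "t1 \<in> Z" using closed_contains_Inf[OF ne bb cl] t1_def by simp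
    have t1T: "0 \<le> t1" "t1 \<le> T" using t1Z Z_def by auto
    have lt: "\<And>t l. t \<in> {0<..<t1} \<Longrightarrow> poly (zeta$l) t \<ge> 0"
    proof -
      fix t l assume t: "t \<in> {0<..<t1}"
      have "t \<notin> Z"
      proof
        assume "t \<in> Z" then have "t1 \<le> t" unfolding t1_def using bb by (rule cInf_lower)
        with t show False by auto
      qed
      then show "poly (zeta$l) t \<ge> 0" using t t1T unfolding Z_def by (auto simp: not_le less_imp_le)
    qed
    have "\<forall>i. poly (zeta$i) t1 > 0"
    proof
      fix i
      have "exp (mu * 0) * poly (zeta$i) 0 \<le> exp (mu * t1) * poly (zeta$i) t1"
        unfolding mu_def by (rule mono_u[OF metz dec _ t1T(1) t1T(2) lt]) auto
      then have "0 < exp (mu * t1) * poly (zeta$i) t1" using init[of i] e2 by simp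
      then show "poly (zeta$i) t1 > 0" by (simp add: zero_less_mult_iff)
    qed
    with t1Z show False unfolding Z_def using not_le by auto
  qed
  show ?thesis
  proof (intro ballI allI)
    fix t i assume t: "t \<in> {0..T}"
    have "exp (mu * 0) * poly (zeta$i) 0 \<le> exp (mu * t) * poly (zeta$i) t"
      unfolding mu_def using t allpos by (intro mono_u[OF metz dec]) (auto simp: less_imp_le)
    then have h: "e2 \<le> exp (mu * t) * poly (zeta$i) t" using init[of i] by simp
    have "e2 * exp (- mu * T) \<le> e2 * exp (- mu * t)"
      using t mu0 e2 by (intro mult_left_mono) (auto simp: mult_left_mono)
    also have "\<dots> \<le> poly (zeta$i) t"
    proof -
      have "e2 * exp (- mu * t) \<le> exp (mu * t) * poly (zeta$i) t * exp (- mu * t)"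
        using h by (intro mult_right_mono) auto
      also have "\<dots> = poly (zeta$i) t" by (simp add: exp_minus field_simps)
      finally show ?thesis .
    qed
    finally show "poly (zeta$i) t \<ge> e2 * exp (- (\<Sum>k\<in>UNIV. \<bar>A$k$k\<bar>) * T)" unfolding mu_def .
  qed
qed



lemma comp_deriv:
  fixes x :: "real \<Rightarrow> real^'n"
  assumes "(x has_vector_derivative v) (at s)"
  shows "((\<lambda>s. x s $ i) has_real_derivative v$i) (at s)"
proof -
  have "((\<lambda>s. x s $ i) has_derivative (\<lambda>h. (h *\<^sub>R v) $ i)) (at s)"
    using bounded_linear.has_derivative[OF bounded_linear_vec_nth[of i] assms[unfolded has_vector_derivative_def]] .
  then show ?thesis unfolding has_field_derivative_def by (simp add: mult.commute[of _ "v$i"])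
qed

lemma t_off:
  fixes a xi xj ri rj :: real
  assumes "a \<ge> 0" "ri > 0" "\<bar>xi\<bar> \<le> ri" "\<bar>xj\<bar> \<le> rj"
  shows "a * (xi * xj / ri) \<le> a * rj"
proof -
  have "xi * xj / ri \<le> \<bar>xi\<bar> * \<bar>xj\<bar> / ri" using assms
    by (intro divide_right_mono) (auto simp: abs_mult[symmetric])
  also have "\<dots> \<le> ri * \<bar>xj\<bar> / ri" using assms by (intro divide_right_mono mult_right_mono) auto
  also have "\<dots> \<le> rj" using assms by simp
  finally show ?thesis using assms by (intro mult_left_mono) auto
qed

lemma t_diag:
  fixes a x d :: real
  assumes "d > 0"
  shows "a * (x * x / sqrt (x^2 + d^2)) \<le> a * sqrt (x^2 + d^2) + d * \<bar>a\<bar>"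
proof -
  define r where "r = sqrt (x^2 + d^2)"
  have r0: "r > 0" unfolding r_def using assms by (intro real_sqrt_gt_zero) (auto intro: add_nonneg_pos)
  have rr: "r * r = x*x + d*d" unfolding r_def by (metis power2_eq_square real_sqrt_pow2 add_nonneg_nonneg zero_le_power2)
  have dr: "d \<le> r" unfolding r_def using assms by (intro real_le_rsqrt) auto
  have "a * (x * x / r) = a * r - a * (d * d / r)" using rr r0 by (simp add: field_simps)
  also have "- a * (d * d / r) \<le> \<bar>a\<bar> * (d * d / r)" using r0 by (intro mult_right_mono) auto
  hence "a * r - a * (d * d / r) \<le> a * r + \<bar>a\<bar> * (d * d / r)" by linarith
  also have "\<bar>a\<bar> * (d * d / r) \<le> \<bar>a\<bar> * d"
  proof -
    have "d * d / r \<le> d * r / r" using r0 dr assms by (intro divide_right_mono mult_left_mono) auto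
    then have "d * d / r \<le> d" using r0 by simp
    then show ?thesis by (intro mult_left_mono) auto
  qed
  hence "a * r + \<bar>a\<bar> * (d * d / r) \<le> a * r + d * \<bar>a\<bar>" by (simp add: mult.commute)
  finally show ?thesis unfolding r_def .
qed

lemma key_ineq:
  fixes A :: "real^'n^'n" and x :: "real^'n"
  assumes metz: "metzler A" and d: "d > 0"
  shows "x$i * (A *v x)$i / sqrt ((x$i)^2 + d^2)
     \<le> (\<Sum>j\<in>UNIV. A$i$j * sqrt ((x$j)^2 + d^2)) + d * \<bar>A$i$i\<bar>"
proof -
  define r where "r j = sqrt ((x$j)^2 + d^2)" for j
  have r0: "r j > 0" for j unfolding r_def using d by (intro real_sqrt_gt_zero) (auto intro: add_nonneg_pos)
  have rx: "\<bar>x$j\<bar> \<le> r j" for j unfolding r_def by (intro real_le_rsqrt) auto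
  have "x$i * (A *v x)$i / r i = (\<Sum>j\<in>UNIV. A$i$j * (x$i * x$j / r i))"
    by (simp add: matrix_vector_mult_def sum_distrib_left sum_divide_distrib algebra_simps)
  also have "\<dots> \<le> (\<Sum>j\<in>UNIV. A$i$j * r j + (if j = i then d * \<bar>A$i$i\<bar> else 0))"
  proof (intro sum_mono)
    fix j
    show "A$i$j * (x$i * x$j / r i) \<le> A$i$j * r j + (if j = i then d * \<bar>A$i$i\<bar> else 0)"
    proof (cases "j = i")
      case True
      then show ?thesis using t_diag[OF d, of "A$i$i" "x$i"] by (simp add: r_def)
    next
      case False
      then show ?thesis using t_off[of "A$i$j" "r i" "x$i" "x$j" "r j"] metz r0 rx
        by (auto simp: metzler_def)
    qed
  qed
  also have "\<dots> = (\<Sum>j\<in>UNIV. A$i$j * r j) + d * \<bar>A$i$i\<bar>"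
    by (simp add: sum.distrib)
  finally show ?thesis by (simp add: r_def)
qed



lemma alg_id:
  fixes p r z c :: "'n::finite \<Rightarrow> real" and M :: "'n \<Rightarrow> 'n \<Rightarrow> real"
  shows "(\<Sum>i\<in>UNIV. - p i * r i + z i * ((\<Sum>j\<in>UNIV. M i j * r j) + c i))
    = (\<Sum>j\<in>UNIV. r j * ((\<Sum>i\<in>UNIV. z i * M i j) - p j)) + (\<Sum>i\<in>UNIV. z i * c i)"
proof -
  have "(\<Sum>i\<in>UNIV. z i * (\<Sum>j\<in>UNIV. M i j * r j)) = (\<Sum>j\<in>UNIV. r j * (\<Sum>i\<in>UNIV. z i * M i j))"
  proof -
    have "(\<Sum>i\<in>UNIV. z i * (\<Sum>j\<in>UNIV. M i j * r j)) = (\<Sum>i\<in>UNIV. \<Sum>j\<in>UNIV. z i * M i j * r j)"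
      by (simp add: sum_distrib_left mult.assoc)
    also have "\<dots> = (\<Sum>j\<in>UNIV. \<Sum>i\<in>UNIV. z i * M i j * r j)" by (rule sum.swap)
    also have "\<dots> = (\<Sum>j\<in>UNIV. r j * (\<Sum>i\<in>UNIV. z i * M i j))"
      by (simp add: sum_distrib_left mult_ac)
    finally show ?thesis .
  qed
  then show ?thesis
    by (simp add: sum.distrib algebra_simps sum_subtractf)
qed

lemma term_deriv:
  fixes x :: "real \<Rightarrow> real^'n"
  assumes xd: "(x has_vector_derivative v) (at s)" and d: "d > 0"
  shows "((\<lambda>s. poly p (T - (s - a)) * sqrt ((x s $ i)^2 + d^2)) has_real_derivative
     - poly (pderiv p) (T - (s - a)) * sqrt ((x s $ i)^2 + d^2)
     + poly p (T - (s - a)) * (x s $ i * v $ i / sqrt ((x s $ i)^2 + d^2))) (at s)"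
proof -
  have xi: "((\<lambda>s. x s $ i) has_real_derivative v$i) (at s)" by (rule comp_deriv[OF xd])
  have pos: "(x s $ i)^2 + d^2 > 0" using d by (auto intro: add_nonneg_pos)
  have p1: "((\<lambda>s. poly p (T - (s - a))) has_real_derivative - poly (pderiv p) (T - (s - a))) (at s)"
  proof -
    have g: "((\<lambda>s. T - (s - a)) has_real_derivative -1) (at s)" by (auto intro!: derivative_eq_intros)
    show ?thesis using DERIV_chain2[OF poly_DERIV g] by simp
  qed
  have p2: "((\<lambda>s. sqrt ((x s $ i)^2 + d^2)) has_real_derivative (x s $ i * v $ i / sqrt ((x s $ i)^2 + d^2))) (at s)"
    using pos by (auto intro!: derivative_eq_intros xi simp: field_simps power2_eq_square)
  show ?thesis using DERIV_mult[OF p1 p2] by (simp add: algebra_simps)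
qed



lemma sqrt_le_abs_plus:
  fixes y d :: real assumes "d > 0"
  shows "sqrt (y^2 + d^2) \<le> \<bar>y\<bar> + d"
  using assms by (intro real_le_lsqrt) (auto simp: power2_eq_square algebra_simps)

lemma flow_step:
  fixes A :: "real^'n^'n" and zeta :: "real poly ^ 'n" and x :: "real \<Rightarrow> real^'n"
  assumes metz: "metzler A" and T: "T > 0"
    and dec: "\<And>t j. t \<in> {0..T} \<Longrightarrow> (\<Sum>i\<in>UNIV. poly (zeta$i) t * A$i$j) - poly (pderiv (zeta$j)) t \<le> 0"
    and pos: "\<And>t i. t \<in> {0..T} \<Longrightarrow> poly (zeta$i) t \<ge> 0"
    and bnd: "\<And>t. t \<in> {0..T} \<Longrightarrow> (\<Sum>i\<in>UNIV. poly (zeta$i) t) \<le> B"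
    and der: "\<And>s. s \<in> {a<..<a+T} \<Longrightarrow> (x has_vector_derivative (A *v x s)) (at s)"
    and s12: "a < s1" "s1 \<le> s2" "s2 < a + T"
  shows "(\<Sum>i\<in>UNIV. poly (zeta$i) (T - (s2 - a)) * \<bar>x s2 $ i\<bar>)
       \<le> (\<Sum>i\<in>UNIV. poly (zeta$i) (T - (s1 - a)) * \<bar>x s1 $ i\<bar>)"
proof -
  define Ad where "Ad = (\<Sum>k\<in>UNIV. \<bar>A$k$k\<bar>)"
  have Ad0: "Ad \<ge> 0" unfolding Ad_def by (intro sum_nonneg) auto
  have B0: "B \<ge> 0"
  proof -
    have "0 \<le> (\<Sum>i\<in>UNIV. poly (zeta$i) 0)" using pos[of 0] T by (intro sum_nonneg) auto
    also have "\<dots> \<le> B" using bnd[of 0] T by auto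
    finally show ?thesis .
  qed
  define G where "G s = (\<Sum>i\<in>UNIV. poly (zeta$i) (T - (s - a)) * \<bar>x s $ i\<bar>)" for s
  have main: "G s2 \<le> G s1 + d * (B + B * Ad * T)" if d: "d > 0" for d
  proof -
    define r where "r i s = sqrt ((x s $ i)^2 + d^2)" for i s
    define Gd where "Gd s = (\<Sum>i\<in>UNIV. poly (zeta$i) (T - (s - a)) * r i s)" for s
    define Dd where "Dd s = (\<Sum>i\<in>UNIV. - poly (pderiv (zeta$i)) (T - (s - a)) * r i s
       + poly (zeta$i) (T - (s - a)) * (x s $ i * (A *v x s) $ i / r i s))" for s
    have dGd: "(Gd has_real_derivative Dd s) (at s)" if "s \<in> {a<..<a+T}" for s
      unfolding Gd_def Dd_def r_def
      by (rule DERIV_sum, rule term_deriv[OF der[OF that] d])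
    have Dd_le: "Dd s \<le> d * (B * Ad)" if s: "s \<in> {a<..<a+T}" for s
    proof -
      define t where "t = T - (s - a)"
      have t: "t \<in> {0..T}" using s unfolding t_def by auto
      have "Dd s \<le> (\<Sum>i\<in>UNIV. - poly (pderiv (zeta$i)) t * r i s
          + poly (zeta$i) t * ((\<Sum>j\<in>UNIV. A$i$j * r j s) + d * \<bar>A$i$i\<bar>))"
        unfolding Dd_def t_def[symmetric]
      proof (intro sum_mono add_left_mono mult_left_mono)
        fix i show "x s $ i * (A *v x s) $ i / r i s \<le> (\<Sum>j\<in>UNIV. A$i$j * r j s) + d * \<bar>A$i$i\<bar>"
          unfolding r_def by (rule key_ineq[OF metz d])
        show "0 \<le> poly (zeta$i) t" using pos[OF t] .
      qed
      also have "\<dots> = (\<Sum>j\<in>UNIV. r j s * ((\<Sum>i\<in>UNIV. poly (zeta$i) t * A$i$j) - poly (pderiv (zeta$j)) t))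
          + (\<Sum>i\<in>UNIV. poly (zeta$i) t * (d * \<bar>A$i$i\<bar>))"
        by (rule alg_id)
      also have "\<dots> \<le> 0 + (\<Sum>i\<in>UNIV. poly (zeta$i) t * (d * Ad))"
      proof -
        have h1: "r j s * ((\<Sum>i\<in>UNIV. poly (zeta$i) t * A$i$j) - poly (pderiv (zeta$j)) t) \<le> 0" for j
          using dec[OF t, of j] unfolding r_def by (intro mult_nonneg_nonpos) auto
        have h2: "poly (zeta$i) t * (d * \<bar>A$i$i\<bar>) \<le> poly (zeta$i) t * (d * Ad)" for i
          unfolding Ad_def using d pos[OF t, of i]
          by (intro mult_left_mono member_le_sum) auto
        show ?thesis by (intro add_mono sum_nonpos sum_mono h1 h2)
      qed
      also have "\<dots> = d * Ad * (\<Sum>i\<in>UNIV. poly (zeta$i) t)" by (simp add: sum_distrib_left mult_ac)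
      also have "\<dots> \<le> d * Ad * B" using bnd[OF t] d Ad0 by (intro mult_left_mono) auto
      finally show ?thesis by (simp add: mult_ac)
    qed
    define f where "f s = Gd s - d * (B * Ad) * s" for s
    have "f s2 \<le> f s1"
    proof (rule DERIV_nonpos_imp_nonincreasing[OF s12(2)])
      fix s assume "s1 \<le> s" "s \<le> s2"
      then have s: "s \<in> {a<..<a+T}" using s12 by auto
      have "(f has_real_derivative Dd s - d * (B * Ad) * 1) (at s)"
        unfolding f_def[abs_def] by (intro DERIV_diff dGd[OF s] DERIV_cmult DERIV_ident)
      then show "\<exists>y. (f has_real_derivative y) (at s) \<and> y \<le> 0" using Dd_le[OF s]
        by (intro exI[of _ "Dd s - d * (B * Ad) * 1"]) simp
    qed
    then have Gd12: "Gd s2 \<le> Gd s1 + d * (B * Ad) * T"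
    proof -
      have "d * (B * Ad) * (s2 - s1) \<le> d * (B * Ad) * T"
        using s12 d B0 Ad0 by (intro mult_left_mono) auto
      then show ?thesis using \<open>f s2 \<le> f s1\<close> unfolding f_def by (simp add: algebra_simps)
    qed
    have "G s2 \<le> Gd s2" unfolding G_def Gd_def r_def
      using s12 by (intro sum_mono mult_left_mono pos real_le_rsqrt) auto
    moreover have "Gd s1 \<le> G s1 + d * B"
    proof -
      have "Gd s1 \<le> (\<Sum>i\<in>UNIV. poly (zeta$i) (T - (s1 - a)) * (\<bar>x s1 $ i\<bar> + d))"
        unfolding Gd_def r_def using s12 d by (intro sum_mono mult_left_mono pos sqrt_le_abs_plus) auto
      also have "\<dots> = G s1 + d * (\<Sum>i\<in>UNIV. poly (zeta$i) (T - (s1 - a)))"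
        unfolding G_def by (simp add: algebra_simps sum.distrib sum_distrib_left)
      also have "\<dots> \<le> G s1 + d * B" using bnd[of "T - (s1 - a)"] s12 d by (intro add_left_mono mult_left_mono) auto
      finally show ?thesis .
    qed
    ultimately show ?thesis using Gd12 by (simp add: algebra_simps)
  qed
  have K0: "B + B * Ad * T \<ge> 0" using B0 Ad0 T by auto
  have "G s2 \<le> G s1"
  proof (rule field_le_epsilon)
    fix e :: real assume e: "e > 0"
    define d where "d = e / (B + B * Ad * T + 1)"
    have d: "d > 0" unfolding d_def using e K0 by auto
    have "d * (B + B * Ad * T) \<le> e" unfolding d_def using e K0 by (simp add: field_simps)
    then show "G s2 \<le> G s1 + e" using main[OF d] by linarith
  qed
  then show ?thesis unfolding G_def .
qed



lemma flow_interval: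
  fixes A :: "real^'n^'n" and zeta :: "real poly ^ 'n" and x :: "real \<Rightarrow> real^'n"
  assumes metz: "metzler A" and T: "T > 0"
    and dec: "\<And>t j. t \<in> {0..T} \<Longrightarrow> (\<Sum>i\<in>UNIV. poly (zeta$i) t * A$i$j) - poly (pderiv (zeta$j)) t \<le> 0"
    and pos: "\<And>t i. t \<in> {0..T} \<Longrightarrow> poly (zeta$i) t \<ge> 0"
    and bnd: "\<And>t. t \<in> {0..T} \<Longrightarrow> (\<Sum>i\<in>UNIV. poly (zeta$i) t) \<le> B"
    and cont: "continuous_on {a<..a+T} x"
    and der: "\<And>s. s \<in> {a<..<a+T} \<Longrightarrow> (x has_vector_derivative (A *v x s)) (at s)"
    and lim: "(x \<longlongrightarrow> y0) (at_right a)"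
    and s: "s \<in> {a<..a+T}"
  shows "(\<Sum>i\<in>UNIV. poly (zeta$i) (T - (s - a)) * \<bar>x s $ i\<bar>)
       \<le> (\<Sum>i\<in>UNIV. poly (zeta$i) T * \<bar>y0 $ i\<bar>)"
proof -
  define G where "G s = (\<Sum>i\<in>UNIV. poly (zeta$i) (T - (s - a)) * \<bar>x s $ i\<bar>)" for s
  define G0 where "G0 = (\<Sum>i\<in>UNIV. poly (zeta$i) T * \<bar>y0 $ i\<bar>)"
  have lt: "((\<lambda>s. T - (s - a)) \<longlongrightarrow> T) (at_right a)"
    by (auto intro!: tendsto_eq_intros)
  have limG: "(G \<longlongrightarrow> G0) (at_right a)"
    unfolding G_def G0_def
    by (intro tendsto_sum tendsto_mult tendsto_poly lt tendsto_rabs tendsto_vec_nth lim)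
  have inner: "G s \<le> G0" if s: "s \<in> {a<..<a+T}" for s
  proof (rule tendsto_le[OF trivial_limit_at_right_real limG tendsto_const])
    show "\<forall>\<^sub>F s1 in at_right a. G s \<le> G s1"
      using eventually_at_right_real[of a s] s
    proof (auto elim!: eventually_mono)
      fix s1 assume "a < s1" "s1 < s"
      then show "G s \<le> G s1" unfolding G_def using s
        by (intro flow_step[OF metz T dec pos bnd der]) auto
    qed
  qed
  show ?thesis
  proof (cases "s < a + T")
    case True
    then show ?thesis using inner s unfolding G_def G0_def by auto
  next
    case False
    then have sb: "s = a + T" using s by auto
    define c where "c = a + T / 2"
    have "continuous_on {c..a+T} x" unfolding c_def
      by (rule continuous_on_subset[OF cont]) (use T in auto)
    then have "(x \<longlongrightarrow> x (a+T)) (at (a+T) within {c..a+T})"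
      using T unfolding c_def continuous_on_def by auto
    then have lx: "(x \<longlongrightarrow> x (a+T)) (at_left (a+T))"
      using T at_within_Icc_at_left[of c "a+T"] unfolding c_def by auto
    have lt2: "((\<lambda>s. T - (s - a)) \<longlongrightarrow> T - ((a+T) - a)) (at_left (a+T))"
      by (intro tendsto_intros)
    have limGb: "(G \<longlongrightarrow> G (a+T)) (at_left (a+T))"
      unfolding G_def
      by (intro tendsto_sum tendsto_mult tendsto_poly lt2 tendsto_rabs tendsto_vec_nth lx)
    have "G (a+T) \<le> G0"
    proof (rule tendsto_le[OF trivial_limit_at_left_real tendsto_const limGb])
      show "\<forall>\<^sub>F s in at_left (a+T). G s \<le> G0"
      proof -
        have "\<forall>\<^sub>F s in at_left (a+T). s \<in> {a<..<a+T}" using eventually_at_left_real[of a "a+T"] T by auto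
        then show ?thesis by (rule eventually_mono) (rule inner)
      qed
    qed
    then show ?thesis using sb unfolding G_def G0_def by simp
  qed
qed



lemma find_interval:
  fixes t0 T s :: real assumes T: "T > 0" and s: "s > t0"
  shows "\<exists>k::nat. t0 + real k * T < s \<and> s \<le> t0 + real (Suc k) * T"
proof -
  define r where "r = (s - t0) / T"
  have r0: "r > 0" unfolding r_def using T s by auto
  define c where "c = ceiling r"
  have c1: "c \<ge> 1" unfolding c_def using r0 by (simp add: one_le_ceiling)
  have cr: "real_of_int c - 1 < r" "r \<le> real_of_int c" unfolding c_def by linarith+
  define k where "k = nat (c - 1)"
  have kc: "real k = real_of_int c - 1" unfolding k_def using c1 by simp
  have "real k * T < r * T" using cr kc T by (intro mult_strict_right_mono) auto
  moreover have "r * T \<le> real (Suc k) * T" using cr kc T by (intro mult_right_mono) auto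
  moreover have "r * T = s - t0" unfolding r_def using T by simp
  ultimately show ?thesis by (intro exI[of _ k]) auto
qed

lemma tk_formula:
  assumes "\<forall>k. tk (Suc k) - tk k = (T::real)"
  shows "tk k = tk 0 + real k * T"
  by (induction k) (use assms in \<open>auto simp: algebra_simps\<close>)

lemma geom_decay:
  fixes V :: "nat \<Rightarrow> real"
  assumes "\<And>k. V (Suc k) \<le> q * V k" "q \<ge> 0"
  shows "V k \<le> q ^ k * V 0"
proof (induction k)
  case (Suc k)
  have "V (Suc k) \<le> q * V k" by (rule assms(1))
  also have "\<dots> \<le> q * (q ^ k * V 0)" using Suc assms(2) by (intro mult_left_mono) auto
  finally show ?case by simp
qed simp



lemma N_le_card_norm:
  fixes y :: "real^'n"
  shows "(\<Sum>i\<in>UNIV. \<bar>y$i\<bar>) \<le> real CARD('n) * norm y"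
proof -
  have "(\<Sum>i\<in>UNIV. \<bar>y$i\<bar>) \<le> (\<Sum>i\<in>(UNIV::'n set). norm y)"
    by (rule sum_mono) (rule component_le_norm_cart)
  then show ?thesis by simp
qed

lemma abs_Jv:
  fixes J :: "real^'n^'n" assumes "nonneg_mat J"
  shows "\<bar>(J *v y)$i\<bar> \<le> (\<Sum>j\<in>UNIV. J$i$j * \<bar>y$j\<bar>)"
proof -
  have "\<bar>(J *v y)$i\<bar> \<le> (\<Sum>j\<in>UNIV. \<bar>J$i$j * y$j\<bar>)"
    unfolding matrix_vector_mult_def by (simp add: sum_abs)
  also have "\<dots> = (\<Sum>j\<in>UNIV. J$i$j * \<bar>y$j\<bar>)"
    using assms by (simp add: abs_mult nonneg_mat_def)
  finally show ?thesis .
qed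

lemma jump_bound:
  fixes J :: "real^'n^'n" and zeta :: "real poly ^ 'n"
  assumes nJ: "nonneg_mat J"
    and pos: "\<And>i. poly (zeta$i) T \<ge> 0"
    and jmp: "\<And>j. (\<Sum>i\<in>UNIV. poly (zeta$i) T * J$i$j) \<le> poly (zeta$j) 0 - eps1"
  shows "(\<Sum>i\<in>UNIV. poly (zeta$i) T * \<bar>(J *v y)$i\<bar>)
     \<le> (\<Sum>j\<in>UNIV. poly (zeta$j) 0 * \<bar>y$j\<bar>) - eps1 * (\<Sum>j\<in>UNIV. \<bar>y$j\<bar>)"
proof -
  have "(\<Sum>i\<in>UNIV. poly (zeta$i) T * \<bar>(J *v y)$i\<bar>)
      \<le> (\<Sum>i\<in>UNIV. poly (zeta$i) T * (\<Sum>j\<in>UNIV. J$i$j * \<bar>y$j\<bar>))"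
    by (intro sum_mono mult_left_mono abs_Jv[OF nJ] pos)
  also have "\<dots> = (\<Sum>i\<in>UNIV. \<Sum>j\<in>UNIV. poly (zeta$i) T * J$i$j * \<bar>y$j\<bar>)"
    by (simp add: sum_distrib_left mult.assoc)
  also have "\<dots> = (\<Sum>j\<in>UNIV. \<Sum>i\<in>UNIV. poly (zeta$i) T * J$i$j * \<bar>y$j\<bar>)"
    by (rule sum.swap)
  also have "\<dots> = (\<Sum>j\<in>UNIV. \<bar>y$j\<bar> * (\<Sum>i\<in>UNIV. poly (zeta$i) T * J$i$j))"
    by (simp add: sum_distrib_left mult_ac)
  also have "\<dots> \<le> (\<Sum>j\<in>UNIV. \<bar>y$j\<bar> * (poly (zeta$j) 0 - eps1))"
    by (intro sum_mono mult_left_mono jmp) auto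
  also have "\<dots> = (\<Sum>j\<in>UNIV. poly (zeta$j) 0 * \<bar>y$j\<bar>) - eps1 * (\<Sum>j\<in>UNIV. \<bar>y$j\<bar>)"
    by (simp add: algebra_simps sum_subtractf sum_distrib_left)
  finally show ?thesis .
qed



lemma gas_from:
  fixes A J :: "real^'n^'n" and zeta :: "real poly ^ 'n"
  assumes metz: "metzler A" and nJ: "nonneg_mat J" and T: "Tbar > 0" and e1: "eps1 > 0"
    and dec: "\<And>t j. t \<in> {0..Tbar} \<Longrightarrow> (\<Sum>i\<in>UNIV. poly (zeta$i) t * A$i$j) - poly (pderiv (zeta$j)) t \<le> 0"
    and posm: "\<And>t i. t \<in> {0..Tbar} \<Longrightarrow> poly (zeta$i) t \<ge> m" and m: "m > 0"
    and bnd: "\<And>t. t \<in> {0..Tbar} \<Longrightarrow> (\<Sum>i\<in>UNIV. poly (zeta$i) t) \<le> B"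
    and jmp: "\<And>j. (\<Sum>i\<in>UNIV. poly (zeta$i) Tbar * J$i$j) \<le> poly (zeta$j) 0 - eps1"
  shows "GAS_const_dwell A J Tbar"
proof -
  have pos: "poly (zeta$i) t \<ge> 0" if "t \<in> {0..Tbar}" for t i
    using posm[OF that, of i] m by linarith
  define V where "V y = (\<Sum>i\<in>UNIV. poly (zeta$i) 0 * \<bar>y$i\<bar>)" for y :: "real^'n"
  define N where "N y = (\<Sum>i\<in>UNIV. \<bar>y$i\<bar>)" for y :: "real^'n"
  define Vm where "Vm = (\<Sum>i\<in>(UNIV::'n set). poly (zeta$i) 0)"
  have z0: "poly (zeta$i) 0 \<ge> m" for i using posm[of 0] T by auto
  have Vm0: "Vm > 0" unfolding Vm_def using z0 m
    by (intro sum_pos) (auto intro: less_le_trans)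
  have ziVm: "poly (zeta$i) 0 \<le> Vm" for i unfolding Vm_def
    using pos[of 0] T by (intro member_le_sum) auto
  have V_le: "V y \<le> Vm * N y" for y unfolding V_def N_def sum_distrib_left
    by (intro sum_mono mult_right_mono ziVm) auto
  have V0: "V y \<ge> 0" for y unfolding V_def using pos[of 0] T by (intro sum_nonneg mult_nonneg_nonneg) auto
  define q where "q = max 0 (1 - eps1 / Vm)"
  have q0: "q \<ge> 0" unfolding q_def by simp
  have q1: "q < 1"
  proof -
    have "eps1 / Vm > 0" using e1 Vm0 by simp
    then show ?thesis unfolding q_def by simp
  qed
  have Vq: "V y - eps1 * N y \<le> q * V y" for y
  proof -
    have "V y / Vm \<le> N y" using V_le[of y] Vm0 by (simp add: pos_divide_le_eq mult.commute)
    then have "eps1 * (V y / Vm) \<le> eps1 * N y" using e1 by (intro mult_left_mono) auto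
    then have "V y - eps1 * N y \<le> (1 - eps1 / Vm) * V y" by (simp add: algebra_simps)
    also have "\<dots> \<le> q * V y" unfolding q_def using V0[of y] by (intro mult_right_mono) auto
    finally show ?thesis .
  qed
  define K where "K = Vm * real CARD('n) / m"
  have K0: "K \<ge> 0" unfolding K_def using Vm0 m by auto
  have BND: "\<exists>k. tk k < s \<and> s \<le> tk (Suc k) \<and> norm (x s) \<le> K * q ^ k * norm (x (tk 0))"
    if sol: "impulsive_solution A J Tbar tk x" and s: "s > tk 0" for tk x s
  proof -
    have dw: "\<forall>k. tk (Suc k) - tk k = Tbar" using sol unfolding impulsive_solution_def by blast
    have tS: "tk (Suc k) = tk k + Tbar" for k using dw by (metis add.commute diff_add_cancel)
    have step: "(\<forall>s\<in>{tk k<..tk (Suc k)}. m * N (x s) \<le> V (x (tk k)) - eps1 * N (x (tk k)))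
        \<and> V (x (tk (Suc k))) \<le> V (x (tk k)) - eps1 * N (x (tk k))" for k
    proof -
      have cont: "continuous_on {tk k<..tk k + Tbar} x"
        using sol unfolding impulsive_solution_def tS by blast
      have der: "\<And>s. s \<in> {tk k<..<tk k + Tbar} \<Longrightarrow> (x has_vector_derivative (A *v x s)) (at s)"
        using sol unfolding impulsive_solution_def tS by blast
      have lim: "(x \<longlongrightarrow> J *v x (tk k)) (at_right (tk k))"
        using sol unfolding impulsive_solution_def by blast
      have fl: "(\<Sum>i\<in>UNIV. poly (zeta$i) (Tbar - (s - tk k)) * \<bar>x s $ i\<bar>)
          \<le> V (x (tk k)) - eps1 * N (x (tk k))" if "s \<in> {tk k<..tk k + Tbar}" for s
      proof -
        have pT: "poly (zeta$i) Tbar \<ge> 0" for i using pos[of Tbar] T by auto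
        have "(\<Sum>i\<in>UNIV. poly (zeta$i) (Tbar - (s - tk k)) * \<bar>x s $ i\<bar>)
           \<le> (\<Sum>i\<in>UNIV. poly (zeta$i) Tbar * \<bar>(J *v x (tk k)) $ i\<bar>)"
          by (rule flow_interval[OF metz T dec pos bnd cont der lim that])
        also have "\<dots> \<le> V (x (tk k)) - eps1 * N (x (tk k))"
          unfolding V_def N_def by (rule jump_bound[OF nJ pT jmp])
        finally show ?thesis .
      qed
      show ?thesis
      proof (intro conjI ballI)
        fix s assume s: "s \<in> {tk k<..tk (Suc k)}"
        then have s': "s \<in> {tk k<..tk k + Tbar}" using tS by auto
        have "m * N (x s) = (\<Sum>i\<in>UNIV. m * \<bar>x s $ i\<bar>)" unfolding N_def by (simp add: sum_distrib_left)
        also have "\<dots> \<le> (\<Sum>i\<in>UNIV. poly (zeta$i) (Tbar - (s - tk k)) * \<bar>x s $ i\<bar>)"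
          using s' by (intro sum_mono mult_right_mono posm) auto
        also have "\<dots> \<le> V (x (tk k)) - eps1 * N (x (tk k))" using fl[OF s'] .
        finally show "m * N (x s) \<le> V (x (tk k)) - eps1 * N (x (tk k))" .
      next
        have "tk k + Tbar \<in> {tk k<..tk k + Tbar}" using T by auto
        from fl[OF this] show "V (x (tk (Suc k))) \<le> V (x (tk k)) - eps1 * N (x (tk k))"
          unfolding V_def tS by simp
      qed
    qed
    have geo: "V (x (tk k)) \<le> q ^ k * V (x (tk 0))" for k
    proof (rule geom_decay[OF _ q0])
      fix k
      have "V (x (tk (Suc k))) \<le> V (x (tk k)) - eps1 * N (x (tk k))" using step[of k] by blast
      also have "\<dots> \<le> q * V (x (tk k))" by (rule Vq)
      finally show "V (x (tk (Suc k))) \<le> q * V (x (tk k))" .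
    qed
    obtain k where k: "tk 0 + real k * Tbar < s" "s \<le> tk 0 + real (Suc k) * Tbar"
      using find_interval[OF T s] by blast
    have sk: "s \<in> {tk k<..tk (Suc k)}" using k tk_formula[OF dw, of k] tk_formula[OF dw, of "Suc k"] by auto
    have "m * N (x s) \<le> V (x (tk k)) - eps1 * N (x (tk k))" using step[of k] sk by blast
    also have "\<dots> \<le> q * V (x (tk k))" by (rule Vq)
    also have "\<dots> \<le> 1 * V (x (tk k))" using V0[of "x (tk k)"] q1 by (intro mult_right_mono) auto
    also have "\<dots> = V (x (tk k))" by simp
    also have "\<dots> \<le> q ^ k * V (x (tk 0))" by (rule geo)
    also have "\<dots> \<le> q ^ k * (Vm * (real CARD('n) * norm (x (tk 0))))"
    proof -
      have "V (x (tk 0)) \<le> Vm * (real CARD('n) * norm (x (tk 0)))"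
      proof -
        have "N (x (tk 0)) \<le> real CARD('n) * norm (x (tk 0))" unfolding N_def by (rule N_le_card_norm)
        then have "Vm * N (x (tk 0)) \<le> Vm * (real CARD('n) * norm (x (tk 0)))"
          using Vm0 by (intro mult_left_mono) auto
        then show ?thesis using V_le[of "x (tk 0)"] by linarith
      qed
      then show ?thesis using q0 by (intro mult_left_mono) auto
    qed
    finally have "m * N (x s) \<le> m * (K * q ^ k * norm (x (tk 0)))"
      unfolding K_def using m by (simp add: field_simps)
    then have "N (x s) \<le> K * q ^ k * norm (x (tk 0))" using m by simp
    moreover have "norm (x s) \<le> N (x s)" unfolding N_def by (rule norm_le_l1_cart)
    ultimately show ?thesis using sk by (intro exI[of _ k]) auto
  qed
  show ?thesis unfolding GAS_const_dwell_def
  proof (intro conjI allI impI)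
    fix e :: real assume e: "e > 0"
    show "\<exists>\<delta>>0. \<forall>tk x. impulsive_solution A J Tbar tk x \<longrightarrow> norm (x (tk 0)) < \<delta> \<longrightarrow> (\<forall>s\<ge>tk 0. norm (x s) < e)"
    proof (intro exI[of _ "e / (K + 1)"] conjI allI impI)
      show "e / (K + 1) > 0" using e K0 by auto
      fix tk x s assume sol: "impulsive_solution A J Tbar tk x" and n0: "norm (x (tk 0)) < e / (K + 1)"
        and s: "tk 0 \<le> s"
      have lt: "(K + 1) * norm (x (tk 0)) < e" using n0 K0 by (simp add: field_simps)
      show "norm (x s) < e"
      proof (cases "s = tk 0")
        case True
        have "norm (x (tk 0)) \<le> (K + 1) * norm (x (tk 0))"
          using K0 by (simp add: distrib_right)
        then show ?thesis using True lt by simp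
      next
        case False
        obtain k where "norm (x s) \<le> K * q ^ k * norm (x (tk 0))"
        proof -
          have "s > tk 0" using s False by auto
          then show ?thesis using that BND[OF sol] by blast
        qed
        moreover have "K * q ^ k * norm (x (tk 0)) \<le> K * 1 * norm (x (tk 0))"
          using K0 q0 q1 by (intro mult_right_mono mult_left_mono power_le_one) auto
        ultimately have "norm (x s) \<le> K * norm (x (tk 0))" by simp
        moreover have "(K + 1) * norm (x (tk 0)) = K * norm (x (tk 0)) + norm (x (tk 0))"
          by (simp add: algebra_simps)
        ultimately show ?thesis using lt norm_ge_zero[of "x (tk 0)"] by linarith
      qed
    qed
  next
    fix tk and x :: "real \<Rightarrow> real^'n" assume sol: "impulsive_solution A J Tbar tk x"
    have dw: "\<forall>k. tk (Suc k) - tk k = Tbar" using sol unfolding impulsive_solution_def by blast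
    show "(x \<longlongrightarrow> 0) at_top"
    proof (rule tendsto_norm_zero_cancel, rule tendstoI)
      fix e :: real assume e: "e > 0"
      have "(\<lambda>k. K * q ^ k * norm (x (tk 0))) \<longlonglongrightarrow> K * 0 * norm (x (tk 0))"
        using q0 q1 by (intro tendsto_intros LIMSEQ_power_zero) auto
      then have "\<forall>\<^sub>F k in sequentially. K * q ^ k * norm (x (tk 0)) < e"
        using e by (auto dest: order_tendstoD(2))
      then obtain k0 where k0: "\<And>k. k \<ge> k0 \<Longrightarrow> K * q ^ k * norm (x (tk 0)) < e"
        unfolding eventually_sequentially by blast
      have "\<forall>s\<ge>tk k0 + 1. dist (norm (x s)) 0 < e"
      proof (intro allI impI)
        fix s assume s: "s \<ge> tk k0 + 1"
        have tk0: "tk k0 \<ge> tk 0" using tk_formula[OF dw, of k0] T by auto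
        obtain k where k: "tk k < s" "s \<le> tk (Suc k)" "norm (x s) \<le> K * q ^ k * norm (x (tk 0))"
          using BND[OF sol, of s] s tk0 by auto
        have "real k0 * Tbar < real (Suc k) * Tbar"
          using k(2) s tk_formula[OF dw, of k0] tk_formula[OF dw, of "Suc k"] by auto
        then have "k0 \<le> k" using T by (simp add: mult_less_cancel_right)
        then show "dist (norm (x s)) 0 < e" using k0[of k] k(3) by auto
      qed
      then show "\<forall>\<^sub>F s in at_top. dist (norm (x s)) 0 < e"
        unfolding eventually_at_top_linorder by blast
    qed
  qed
qed



theorem proposition7:
  fixes A J :: "real^'n^'n" and Tbar eps1 eps2 :: real and dh :: nat
    and zeta :: "real poly ^ 'n" and theta :: "nat \<Rightarrow> nat \<Rightarrow> real^'n"
  assumes "metzler A" and "nonneg_mat J" and "Tbar > 0" and "eps1 > 0" and "eps2 > 0"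
    and "\<forall>i. degree (zeta $ i) \<le> dh"
    and "\<forall>i j. i + j \<le> dh \<longrightarrow> theta i j \<ge> 0"
    and "pvec_eval zeta 0 - eps2 *\<^sub>R 1 \<ge> 0"
    and "\<forall>k m. coeff (cond_poly A zeta theta dh Tbar $ k) m \<ge> 0"
    and "- (pvec_eval zeta Tbar v* J) + pvec_eval zeta 0 - eps1 *\<^sub>R 1 \<ge> 0"
  shows "(\<forall>\<tau>\<in>{0..Tbar}. pvec_eval zeta \<tau> v* A - pvec_eval (pvec_deriv zeta) \<tau> \<le> 0)
    \<and> pvec_eval zeta Tbar v* J - pvec_eval zeta 0 + eps1 *\<^sub>R 1 \<le> 0
    \<and> GAS_const_dwell A J Tbar"
proof -
  have dec: "\<And>t j. t \<in> {0..Tbar} \<Longrightarrow> (\<Sum>i\<in>UNIV. poly (zeta$i) t * A$i$j) - poly (pderiv (zeta$j)) t \<le> 0"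
    using cond_pt[OF assms(7) assms(9)] by blast
  have C1: "\<forall>\<tau>\<in>{0..Tbar}. pvec_eval zeta \<tau> v* A - pvec_eval (pvec_deriv zeta) \<tau> \<le> 0"
    using dec by (auto simp: less_eq_vec_def vector_matrix_mult_def pvec_eval_def pvec_deriv_def)
  have jmp: "(\<Sum>i\<in>UNIV. poly (zeta$i) Tbar * J$i$j) \<le> poly (zeta$j) 0 - eps1" for j
  proof -
    have "\<forall>i. eps1 \<le> poly (zeta $ i) 0 - (\<Sum>ia\<in>UNIV. poly (zeta $ ia) Tbar * J $ ia $ i)"
      using assms(10) by (auto simp: less_eq_vec_def vector_matrix_mult_def pvec_eval_def)
    then have "eps1 \<le> poly (zeta $ j) 0 - (\<Sum>ia\<in>UNIV. poly (zeta $ ia) Tbar * J $ ia $ j)" by blast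
    then show ?thesis by linarith
  qed
  have C2: "pvec_eval zeta Tbar v* J - pvec_eval zeta 0 + eps1 *\<^sub>R 1 \<le> 0"
  proof -
    have "\<And>i. (\<Sum>ia\<in>UNIV. poly (zeta $ ia) Tbar * J $ ia $ i) - poly (zeta $ i) 0 + eps1 \<le> 0"
    proof -
      fix i show "(\<Sum>ia\<in>UNIV. poly (zeta $ ia) Tbar * J $ ia $ i) - poly (zeta $ i) 0 + eps1 \<le> 0"
        using jmp[of i] by linarith
    qed
    then show ?thesis by (auto simp: less_eq_vec_def vector_matrix_mult_def pvec_eval_def)
  qed
  have init: "poly (zeta$i) 0 \<ge> eps2" for i
    using assms(8) by (auto simp: less_eq_vec_def pvec_eval_def)
  have C3: "GAS_const_dwell A J Tbar"
  proof -
    define m where "m = eps2 * exp (- (\<Sum>k\<in>UNIV. \<bar>A$k$k\<bar>) * Tbar)"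
    have m: "m > 0" unfolding m_def using assms(5) by simp
    have posm: "poly (zeta$i) t \<ge> m" if "t \<in> {0..Tbar}" for t i
      using zeta_pos[OF assms(1) dec init assms(5)] assms(3) that unfolding m_def by auto
    have "\<exists>t0\<in>{0..Tbar}. \<forall>t\<in>{0..Tbar}. (\<Sum>i\<in>UNIV. poly (zeta$i) t) \<le> (\<Sum>i\<in>UNIV. poly (zeta$i) t0)"
      using assms(3) by (intro continuous_attains_sup continuous_intros) auto
    then obtain t0 where bnd: "\<And>t. t \<in> {0..Tbar} \<Longrightarrow> (\<Sum>i\<in>UNIV. poly (zeta$i) t) \<le> (\<Sum>i\<in>UNIV. poly (zeta$i) t0)"
      by blast
    show ?thesis by (rule gas_from[OF assms(1) assms(2) assms(3) assms(4) dec posm m bnd jmp])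
  qed
  show ?thesis using C1 C2 C3 by blast
qed

end
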